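(* Let $(X,\alpha,T)$ be a dynamical system with $T=\mathbb{Z}$ or $T=\mathbb{R}$ acting by homeomorphisms on a compact metrizable space $X$. If $f\in E$ and $g\in E^+\setminus\{\alpha^t: t\in T, t\ge0\}$, then $fg\in E^+$.
   Context: $\alpha^t$ are homeomorphisms with $\alpha^{s+t}=\alpha^s\circ\alpha^t$, $\alpha^0=\mathrm{id}$. $E$ is the closure of $\{\alpha^t:t\in T\}$ in $X^X$ (maps $X\to X$, pointwise convergence topology, composition as product) and $E^+$ the closure of $\{\alpha^t:t\ge0\}$. *)

theory Defs
  imports "HOL-Analysis.Analysis"
begin

text \<open>The function type
  'a \<Rightarrow> 'a carries the product topology (pointwise convergence) from Function_Topology.\<close>

definition dyn_system :: "real set \<Rightarrow> (real \<Rightarrow> 'a::metric_space \<Rightarrow> 'a) \<Rightarrow> bool" where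
  "dyn_system T \<alpha> \<longleftrightarrow>
     (T = \<int> \<or> T = UNIV) \<and>
     compact (UNIV :: 'a set) \<and>
     (\<forall>t\<in>T. \<exists>h. homeomorphism UNIV UNIV (\<alpha> t) h) \<and>
     \<alpha> 0 = id \<and>
     (\<forall>s\<in>T. \<forall>t\<in>T. \<alpha> (s + t) = \<alpha> s \<circ> \<alpha> t) \<and>
     continuous_on (T \<times> UNIV) (\<lambda>(t, x). \<alpha> t x)"

definition enveloping :: "real set \<Rightarrow> (real \<Rightarrow> 'a \<Rightarrow> 'a::topological_space) \<Rightarrow> ('a \<Rightarrow> 'a) set" where
  "enveloping T \<alpha> = closure (\<alpha> ` T)"

definition enveloping_plus :: "real set \<Rightarrow> (real \<Rightarrow> 'a \<Rightarrow> 'a::topological_space) \<Rightarrow> ('a \<Rightarrow> 'a) set" where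
  "enveloping_plus T \<alpha> = closure (\<alpha> ` {t\<in>T. 0 \<le> t})"

end

theory Submission
  imports Defs
begin

lemma fun_compact_closed:
  fixes K :: "('b \<Rightarrow> 'a::metric_space) set"
  assumes "compact K" shows "closed K"
proof -
  have H: "Hausdorff_space (euclidean :: ('b \<Rightarrow> 'a) topology)"
    by (metis Hausdorff_space_euclidean Hausdorff_space_product_topology euclidean_product_topology)
  have "closedin euclidean K"
    by (rule compactin_imp_closedin[OF H]) (use assms in simp)
  then show ?thesis by simp
qed

theorem lemma3p5:
  fixes T :: "real set" and \<alpha> :: "real \<Rightarrow> 'a::metric_space \<Rightarrow> 'a"
    and f g :: "'a \<Rightarrow> 'a"
  assumes "dyn_system T \<alpha>"
    and "f \<in> enveloping T \<alpha>"
    and "g \<in> enveloping_plus T \<alpha>"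
    and "g \<notin> \<alpha> ` {t\<in>T. 0 \<le> t}"
  shows "f \<circ> g \<in> enveloping_plus T \<alpha>"
proof -
  have TT: "T = \<int> \<or> T = UNIV" and hom: "\<forall>t\<in>T. \<exists>h. homeomorphism UNIV UNIV (\<alpha> t) h"
    and cont: "continuous_on (T \<times> UNIV) (\<lambda>(t, x). \<alpha> t x)"
    using assms(1) unfolding dyn_system_def by auto
  have Tadd: "s + t \<in> T" if "s \<in> T" "t \<in> T" for s t
    using TT that by auto
  have Tclosed: "closed T" using TT by auto
  have contT: "continuous_on T (\<lambda>t. \<alpha> t)"
  proof (rule continuous_on_coordinatewise_then_product)
    fix x
    have "continuous_on T ((\<lambda>(t, x). \<alpha> t x) \<circ> (\<lambda>t. (t, x)))"
      by (rule continuous_on_compose) (auto intro!: continuous_intros continuous_on_subset[OF cont])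
    then show "continuous_on T (\<lambda>t. \<alpha> t x)" by (simp add: o_def)
  qed
  have contal: "continuous_on UNIV (\<alpha> s)" if "s \<in> T" for s
    using hom that homeomorphism_cont1 by blast
  define Ep where "Ep = closure (\<alpha> ` {t\<in>T. 0 \<le> t})"
  have Epc: "closed Ep" unfolding Ep_def by simp
  have tail: "g \<in> closure (\<alpha> ` {t\<in>T. N \<le> t})" if "N \<ge> 0" for N
  proof -
    have cK: "compact (T \<inter> {0..N})"
      using Tclosed by (simp add: closed_Int_compact)
    have "compact (\<alpha> ` (T \<inter> {0..N}))"
      by (rule compact_continuous_image[OF continuous_on_subset[OF contT] cK]) auto
    then have cl: "closed (\<alpha> ` (T \<inter> {0..N}))" by (rule fun_compact_closed)
    have "{t\<in>T. 0 \<le> t} = (T \<inter> {0..N}) \<union> {t\<in>T. N \<le> t}" using that by auto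
    then have "\<alpha> ` {t\<in>T. 0 \<le> t} = \<alpha> ` (T \<inter> {0..N}) \<union> \<alpha> ` {t\<in>T. N \<le> t}" by auto
    then have "closure (\<alpha> ` {t\<in>T. 0 \<le> t}) = \<alpha> ` (T \<inter> {0..N}) \<union> closure (\<alpha> ` {t\<in>T. N \<le> t})"
      using cl by (simp add: closure_Un closure_closed)
    moreover have "g \<notin> \<alpha> ` (T \<inter> {0..N})" using assms(4) by auto
    ultimately show ?thesis using assms(3) unfolding enveloping_plus_def by auto
  qed
  have step: "\<alpha> s \<circ> g \<in> Ep" if s: "s \<in> T" for s
  proof -
    have g: "g \<in> closure (\<alpha> ` {t\<in>T. \<bar>s\<bar> \<le> t})" using tail by simp
    have cL: "continuous_on UNIV (\<lambda>h::'a\<Rightarrow>'a. \<alpha> s \<circ> h)"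
    proof (rule continuous_on_coordinatewise_then_product)
      fix x
      have "continuous_on UNIV (\<alpha> s \<circ> (\<lambda>h::'a\<Rightarrow>'a. h x))"
        by (rule continuous_on_compose) (auto intro: continuous_on_subset[OF contal[OF s]])
      then show "continuous_on UNIV (\<lambda>h::'a\<Rightarrow>'a. (\<alpha> s \<circ> h) x)" by (simp add: o_def)
    qed
    have "(\<lambda>h. \<alpha> s \<circ> h) ` (\<alpha> ` {t\<in>T. \<bar>s\<bar> \<le> t}) \<subseteq> Ep"
    proof
      fix y assume "y \<in> (\<lambda>h. \<alpha> s \<circ> h) ` (\<alpha> ` {t\<in>T. \<bar>s\<bar> \<le> t})"
      then obtain t where t: "t \<in> T" "\<bar>s\<bar> \<le> t" and y: "y = \<alpha> s \<circ> \<alpha> t" by auto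
      have "y = \<alpha> (s + t)" using y assms(1) s t unfolding dyn_system_def by auto
      moreover have "s + t \<in> {t\<in>T. 0 \<le> t}" using Tadd[OF s t(1)] t(2) by auto
      ultimately have "y \<in> \<alpha> ` {t\<in>T. 0 \<le> t}" by (simp only: image_eqI)
      then show "y \<in> Ep" unfolding Ep_def using closure_subset by (rule subsetD[rotated])
    qed
    then have "(\<lambda>h. \<alpha> s \<circ> h) ` closure (\<alpha> ` {t\<in>T. \<bar>s\<bar> \<le> t}) \<subseteq> Ep"
      by (intro image_closure_subset[OF continuous_on_subset[OF cL] Epc]) auto
    then show ?thesis using g by auto
  qed
  have cR: "continuous_on UNIV (\<lambda>h::'a\<Rightarrow>'a. h \<circ> g)"
    by (rule continuous_on_coordinatewise_then_product) (simp add: o_def)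
  have "(\<lambda>h. h \<circ> g) ` (\<alpha> ` T) \<subseteq> Ep" using step by auto
  then have "(\<lambda>h. h \<circ> g) ` closure (\<alpha> ` T) \<subseteq> Ep"
    by (intro image_closure_subset[OF continuous_on_subset[OF cR] Epc]) auto
  then show ?thesis using assms(2) unfolding enveloping_def enveloping_plus_def Ep_def by auto
qed

end
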